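(* Let $X$ be a continuous real-valued random variable with compact support and fix an integer $K \ge 1$. For each $n > K$, let $Z = Z_n$ be the random variable produced by the SMOTE-$K$ procedure (described in the context) from an i.i.d. sample $X_1, \dots, X_n$ drawn from $X$. Then $Z$ converges to $X$ in mean as $n \to \infty$.
   Context: SMOTE-$K$ procedure: given a sample $X_1,\dots,X_n$ of real numbers and a rank $1 \le K \le n-1$: (1) choose an index $i$ uniformly at random from $\{1,\dots,n\}$; (2) find the $K$ nearest neighbors $X_{i,(1)}, \dots, X_{i,(K)}$ of $X_i$ among the other sample points $\{X_j: j\ne i\}$, where $X_{i,(k)}$ realizes the $k$-th smallest of the distances $|X_j - X_i|$, $j\neq i$; (3) choose one of them, $X_{i,(k)}$, uniformly at random; (4) draw $\lambda \sim U(0,1)$ independently; (5) output $Z = X_i + \lambda (X_{i,(k)} - X_i)$. The random variable $X$ appearing in the conclusion is taken to be the sample point $X_i$ from which $Z$ is generated (which has the distribution of $X$), so convergence in mean means $E[|Z - X_i|] \to 0$. *)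

theory Defs
  imports "HOL-Probability.Probability"
begin

text \<open>Ties are broken by index order
  (stable sort); the distance to the k-th nearest neighbour does not depend on
  the tie-breaking.\<close>
definition knn :: "nat \<Rightarrow> (nat \<Rightarrow> real) \<Rightarrow> nat \<Rightarrow> nat \<Rightarrow> nat" where
  "knn n x i k = sort_key (\<lambda>j. \<bar>x j - x i\<bar>) (filter (\<lambda>j. j \<noteq> i) [0..<n]) ! (k - 1)"

text \<open>Joint probability space of the SMOTE-K procedure with sample size n:
  the i.i.d. sample (X_0,...,X_{n-1}) with law mu, the uniform index i,
  the uniform neighbour rank k in {1..K}, and lambda ~ U(0,1), all independent.\<close>
definition smote_space ::
  "real measure \<Rightarrow> nat \<Rightarrow> nat \<Rightarrow> ((nat \<Rightarrow> real) \<times> nat \<times> nat \<times> real) measure" where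
  "smote_space \<mu> K n =
     PiM {..<n} (\<lambda>_. \<mu>) \<Otimes>\<^sub>M
       (measure_pmf (pmf_of_set {..<n}) \<Otimes>\<^sub>M
         (measure_pmf (pmf_of_set {1..K}) \<Otimes>\<^sub>M uniform_measure lborel {0..1}))"

definition smote_Z :: "nat \<Rightarrow> (nat \<Rightarrow> real) \<times> nat \<times> nat \<times> real \<Rightarrow> real" where
  "smote_Z n \<omega> = (case \<omega> of (x, i, k, l) \<Rightarrow> x i + l * (x (knn n x i k) - x i))"

definition smote_X :: "(nat \<Rightarrow> real) \<times> nat \<times> nat \<times> real \<Rightarrow> real" where
  "smote_X \<omega> = (case \<omega> of (x, i, k, l) \<Rightarrow> x i)"

end

theory Submission
  imports Defs "HOL-Real_Asymp.Real_Asymp"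
begin


lemma meas_count_comp:
  assumes "h \<in> measurable M (count_space UNIV)"
  shows "(\<lambda>x. \<phi> (h x)) \<in> measurable M (count_space UNIV)"
  using measurable_compose[OF assms measurable_count_space, of \<phi>] by (simp add: o_def)

lemma insort_meas:
  fixes g :: "'b \<Rightarrow> 'c \<Rightarrow> 'd::linorder"
  assumes "\<And>a b. {x \<in> space M. g x a \<le> g x b} \<in> sets M"
  shows "(\<lambda>x. insort_key (g x) a ys) \<in> measurable M (count_space UNIV)"
proof (induction ys)
  case Nil
  then show ?case by simp
next
  case (Cons y ys)
  have "(\<lambda>x. if g x a \<le> g x y then a # y # ys else y # insort_key (g x) a ys)
        \<in> measurable M (count_space UNIV)"
    by (rule measurable_If[OF measurable_const meas_count_comp[OF Cons] assms]) simp
  then show ?case by simp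
qed

lemma sort_key_meas:
  fixes g :: "'b \<Rightarrow> 'c::countable \<Rightarrow> 'd::linorder"
  assumes "\<And>a b. {x \<in> space M. g x a \<le> g x b} \<in> sets M"
  shows "(\<lambda>x. sort_key (g x) L) \<in> measurable M (count_space UNIV)"
proof (induction L)
  case Nil
  then show ?case by simp
next
  case (Cons a L)
  have "(\<lambda>x. (\<lambda>ys x. insort_key (g x) a ys) (sort_key (g x) L) x) \<in> measurable M (count_space UNIV)"
    by (rule measurable_compose_countable'[where I=UNIV, OF insort_meas[OF assms]]) (use Cons in auto)
  then show ?case by simp
qed

lemma comp_meas:
  fixes \<mu> :: "real measure"
  assumes "sets \<mu> = sets borel"
  shows "(\<lambda>x. x j) \<in> borel_measurable (PiM I (\<lambda>_. \<mu>))"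
proof (cases "j \<in> I")
  case True
  have "(\<lambda>x. x j) \<in> measurable (PiM I (\<lambda>_. \<mu>)) \<mu>"
    using measurable_component_singleton[OF True, of "\<lambda>_. \<mu>"] by simp
  then show ?thesis using measurable_cong_sets[OF refl assms, of "PiM I (\<lambda>_. \<mu>)"] by blast
next
  case False
  have "(\<lambda>x. undefined::real) \<in> borel_measurable (PiM I (\<lambda>_. \<mu>))" by simp
  moreover have "(\<lambda>x. x j) \<in> borel_measurable (PiM I (\<lambda>_. \<mu>)) \<longleftrightarrow> (\<lambda>x. undefined::real) \<in> borel_measurable (PiM I (\<lambda>_. \<mu>))"
  proof (rule measurable_cong)
    fix w assume "w \<in> space (PiM I (\<lambda>_. \<mu>))"
    then have "w \<in> PiE I (\<lambda>_. space \<mu>)" by (simp add: space_PiM)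
    then show "w j = (undefined::real)" using PiE_arb False by metis
  qed
  ultimately show ?thesis by blast
qed

lemma knn_meas:
  fixes \<mu> :: "real measure"
  assumes "sets \<mu> = sets borel"
  shows "(\<lambda>x. knn n x i k) \<in> measurable (PiM I (\<lambda>_. \<mu>)) (count_space UNIV)"
proof -
  have "(\<lambda>x. sort_key (\<lambda>j. \<bar>x j - x i\<bar>) (filter (\<lambda>j. j \<noteq> i) [0..<n]))
     \<in> measurable (PiM I (\<lambda>_. \<mu>)) (count_space UNIV)"
    by (rule sort_key_meas) (intro borel_measurable_le borel_measurable_abs borel_measurable_diff comp_meas[OF assms])
  from meas_count_comp[OF this, of "\<lambda>L. L ! (k - 1)"] show ?thesis
    unfolding knn_def .
qed

lemma diff_meas:
  fixes \<mu> :: "real measure"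
  assumes "sets \<mu> = sets borel"
  shows "(\<lambda>\<omega>. smote_Z n \<omega> - smote_X \<omega>) \<in> borel_measurable (smote_space \<mu> K n)"
proof -
  let ?S = "smote_space \<mu> K n"
  have fstm: "(\<lambda>\<omega>. fst \<omega> j) \<in> borel_measurable ?S" for j
    unfolding smote_space_def
    by (rule measurable_compose[OF measurable_fst comp_meas[OF assms]])
  have im: "(\<lambda>\<omega>. fst (snd \<omega>)) \<in> measurable ?S (count_space UNIV)"
    unfolding smote_space_def by (simp add: measurable_pmf_measure2[symmetric])
  have km: "(\<lambda>\<omega>. fst (snd (snd \<omega>))) \<in> measurable ?S (count_space UNIV)"
    unfolding smote_space_def by (simp add: measurable_pmf_measure2[symmetric])
  have lm: "(\<lambda>\<omega>. snd (snd (snd \<omega>))) \<in> borel_measurable ?S"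
  proof -
    have "(\<lambda>\<omega>. snd (snd (snd \<omega>))) \<in> measurable ?S (uniform_measure lborel {0..1::real})"
      unfolding smote_space_def by simp
    moreover have "sets (uniform_measure lborel {0..1::real}) = sets borel" by simp
    ultimately show ?thesis using measurable_cong_sets[OF refl, of _ _ ?S] by blast
  qed
  have kn1: "(\<lambda>\<omega>. knn n (fst \<omega>) i k) \<in> measurable ?S (count_space UNIV)" for i k
    unfolding smote_space_def
    by (rule measurable_compose[OF measurable_fst knn_meas[OF assms]])
  have kn2: "(\<lambda>\<omega>. knn n (fst \<omega>) i (fst (snd (snd \<omega>)))) \<in> measurable ?S (count_space UNIV)" for i
    by (rule measurable_compose_countable'[where I=UNIV, OF kn1 km]) auto
  have kn3: "(\<lambda>\<omega>. knn n (fst \<omega>) (fst (snd \<omega>)) (fst (snd (snd \<omega>)))) \<in> measurable ?S (count_space UNIV)"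
    by (rule measurable_compose_countable'[where I=UNIV, OF kn2 im]) auto
  have a1: "(\<lambda>\<omega>. fst \<omega> (knn n (fst \<omega>) (fst (snd \<omega>)) (fst (snd (snd \<omega>))))) \<in> borel_measurable ?S"
    by (rule measurable_compose_countable'[where I=UNIV, OF fstm kn3]) auto
  have a2: "(\<lambda>\<omega>. fst \<omega> (fst (snd \<omega>))) \<in> borel_measurable ?S"
    by (rule measurable_compose_countable'[where I=UNIV, OF fstm im]) auto
  have "(\<lambda>\<omega>. snd (snd (snd \<omega>)) * (fst \<omega> (knn n (fst \<omega>) (fst (snd \<omega>)) (fst (snd (snd \<omega>)))) - fst \<omega> (fst (snd \<omega>))))
     \<in> borel_measurable ?S"
    using lm a1 a2 by measurable
  moreover have "(\<lambda>\<omega>. smote_Z n \<omega> - smote_X \<omega>) = (\<lambda>\<omega>. snd (snd (snd \<omega>)) * (fst \<omega> (knn n (fst \<omega>) (fst (snd \<omega>)) (fst (snd (snd \<omega>)))) - fst \<omega> (fst (snd \<omega>))))"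
    by (auto simp: smote_Z_def smote_X_def split: prod.splits)
  ultimately show ?thesis by simp
qed


lemma knn_facts:
  fixes x :: "nat \<Rightarrow> real"
  assumes "i < n" "1 \<le> k" "k < n"
  shows "knn n x i k < n"
    and "\<epsilon> < \<bar>x (knn n x i k) - x i\<bar> \<Longrightarrow> card {j. j < n \<and> j \<noteq> i \<and> \<bar>x j - x i\<bar> \<le> \<epsilon>} \<le> k - 1"
proof -
  define L where "L = filter (\<lambda>j. j \<noteq> i) [0..<n]"
  define f where "f = (\<lambda>j. \<bar>x j - x i\<bar>)"
  define S where "S = sort_key f L"
  have setL: "set L = {0..<n} - {i}" unfolding L_def by auto
  have "distinct L" unfolding L_def by simp
  then have "length L = card ({0..<n} - {i})" using setL distinct_card by metis
  also have "\<dots> = n - 1" using assms by simp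
  finally have lenS: "length S = n - 1" unfolding S_def by simp
  have setS: "set S = {0..<n} - {i}" unfolding S_def using setL by simp
  have kk: "k - 1 < length S" using lenS assms by simp
  have knnS: "knn n x i k = S ! (k - 1)" unfolding knn_def S_def L_def f_def by simp
  have "S ! (k - 1) \<in> set S" using kk by simp
  then show "knn n x i k < n" using knnS setS by simp
  assume eps: "\<epsilon> < \<bar>x (knn n x i k) - x i\<bar>"
  have sorted: "sorted (map f S)" unfolding S_def by simp
  have "{j. j < n \<and> j \<noteq> i \<and> \<bar>x j - x i\<bar> \<le> \<epsilon>} \<subseteq> set (take (k - 1) S)"
  proof
    fix j assume j: "j \<in> {j. j < n \<and> j \<noteq> i \<and> \<bar>x j - x i\<bar> \<le> \<epsilon>}"
    then have "j \<in> set S" using setS by auto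
    then obtain p where p: "p < length S" "S ! p = j" by (auto simp: in_set_conv_nth)
    have "p < k - 1"
    proof (rule ccontr)
      assume "\<not> p < k - 1"
      then have "map f S ! (k - 1) \<le> map f S ! p"
        using sorted_nth_mono[OF sorted, of "k - 1" p] p by simp
      then have "f (S ! (k - 1)) \<le> f j" using p kk by simp
      then show False using j eps knnS unfolding f_def by simp
    qed
    then show "j \<in> set (take (k - 1) S)" using p by (auto simp: in_set_conv_nth)
  qed
  then have "card {j. j < n \<and> j \<noteq> i \<and> \<bar>x j - x i\<bar> \<le> \<epsilon>} \<le> card (set (take (k - 1) S))"
    by (rule card_mono[rotated]) simp
  also have "\<dots> \<le> length (take (k - 1) S)" by (rule card_length)
  also have "\<dots> \<le> k - 1" by simp
  finally show "card {j. j < n \<and> j \<noteq> i \<and> \<bar>x j - x i\<bar> \<le> \<epsilon>} \<le> k - 1" .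
qed

lemma floor_eq_close:
  fixes a b :: real
  assumes "\<lfloor>a\<rfloor> = \<lfloor>b\<rfloor>"
  shows "\<bar>a - b\<bar> < 1"
  using assms by linarith

lemma bad_card:
  fixes x :: "nat \<Rightarrow> real"
  assumes bnd: "\<forall>j<n. \<bar>x j\<bar> \<le> B" and e: "\<epsilon> > 0" and k: "1 \<le> k" "k < n" and B: "B \<ge> 0"
  shows "real (card {i. i < n \<and> \<epsilon> < \<bar>x (knn n x i k) - x i\<bar>}) \<le> real k * (2 * B / \<epsilon> + 1)"
proof -
  define bad where "bad = {i. i < n \<and> \<epsilon> < \<bar>x (knn n x i k) - x i\<bar>}"
  define c where "c = (\<lambda>i. \<lfloor>(x i + B) / \<epsilon>\<rfloor>)"
  have fin: "finite bad" unfolding bad_def by simp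
  have cell: "card {j. j < n \<and> c j = c i} \<le> k" if i: "i \<in> bad" for i
  proof -
    have "{j. j < n \<and> c j = c i} \<subseteq> insert i {j. j < n \<and> j \<noteq> i \<and> \<bar>x j - x i\<bar> \<le> \<epsilon>}"
    proof
      fix j assume "j \<in> {j. j < n \<and> c j = c i}"
      then have j: "j < n" "c j = c i" by auto
      then have "\<bar>(x j + B) / \<epsilon> - (x i + B) / \<epsilon>\<bar> < 1" unfolding c_def by (intro floor_eq_close) simp
      then have "\<bar>x j - x i\<bar> / \<epsilon> < 1" using e by (simp add: diff_divide_distrib[symmetric] abs_divide)
      then have "\<bar>x j - x i\<bar> \<le> \<epsilon>" using e by (simp add: divide_less_eq)
      then show "j \<in> insert i {j. j < n \<and> j \<noteq> i \<and> \<bar>x j - x i\<bar> \<le> \<epsilon>}" using j by auto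
    qed
    then have "card {j. j < n \<and> c j = c i} \<le> card (insert i {j. j < n \<and> j \<noteq> i \<and> \<bar>x j - x i\<bar> \<le> \<epsilon>})"
      by (rule card_mono[rotated]) simp
    also have "\<dots> \<le> Suc (card {j. j < n \<and> j \<noteq> i \<and> \<bar>x j - x i\<bar> \<le> \<epsilon>})" by (rule card_insert_le_m1) auto
    also have "\<dots> \<le> Suc (k - 1)"
      using knn_facts(2)[where x=x and i=i and n=n and k=k and \<epsilon>=\<epsilon>] i k unfolding bad_def by auto
    finally show ?thesis using k by simp
  qed
  have "bad = (\<Union>v\<in>c ` bad. {i\<in>bad. c i = v})" by auto
  then have "card bad \<le> (\<Sum>v\<in>c ` bad. card {i\<in>bad. c i = v})"
    by (metis card_UN_le fin finite_imageI)
  also have "\<dots> \<le> (\<Sum>v\<in>c ` bad. k)"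
  proof (rule sum_mono)
    fix v assume "v \<in> c ` bad"
    then obtain i where i: "i \<in> bad" "v = c i" by auto
    have "{i'\<in>bad. c i' = v} \<subseteq> {j. j < n \<and> c j = c i}" using i unfolding bad_def by auto
    then have "card {i'\<in>bad. c i' = v} \<le> card {j. j < n \<and> c j = c i}" by (rule card_mono[rotated]) simp
    then show "card {i'\<in>bad. c i' = v} \<le> k" using cell[OF i(1)] by simp
  qed
  also have "\<dots> = card (c ` bad) * k" by simp
  finally have c1: "real (card bad) \<le> real (card (c ` bad)) * real k" by (metis of_nat_le_iff of_nat_mult)
  have "c ` bad \<subseteq> {0..\<lfloor>2 * B / \<epsilon>\<rfloor>}"
  proof
    fix v assume "v \<in> c ` bad"
    then obtain i where i: "i \<in> bad" "v = c i" by auto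
    then have "\<bar>x i\<bar> \<le> B" using bnd unfolding bad_def by auto
    then have "0 \<le> (x i + B) / \<epsilon>" "(x i + B) / \<epsilon> \<le> 2 * B / \<epsilon>" using e by (auto intro: divide_right_mono)
    then show "v \<in> {0..\<lfloor>2 * B / \<epsilon>\<rfloor>}" unfolding i c_def by (auto intro: floor_mono)
  qed
  then have "card (c ` bad) \<le> card {0..\<lfloor>2 * B / \<epsilon>\<rfloor>}" by (rule card_mono[rotated]) simp
  also have "\<dots> = nat (\<lfloor>2 * B / \<epsilon>\<rfloor> + 1)" by simp
  finally have "real (card (c ` bad)) \<le> real (nat (\<lfloor>2 * B / \<epsilon>\<rfloor> + 1))" by simp
  also have "\<dots> = of_int \<lfloor>2 * B / \<epsilon>\<rfloor> + 1" using B e by simp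
  also have "\<dots> \<le> 2 * B / \<epsilon> + 1" by simp
  finally have "real (card (c ` bad)) \<le> 2 * B / \<epsilon> + 1" .
  then have "real (card (c ` bad)) * real k \<le> (2 * B / \<epsilon> + 1) * real k" by (rule mult_right_mono) simp
  with c1 show ?thesis unfolding bad_def by (simp add: mult.commute)
qed


lemma sum_bound:
  fixes x :: "nat \<Rightarrow> real"
  assumes bnd: "\<forall>j<n. \<bar>x j\<bar> \<le> B" and e: "\<epsilon> > 0" and k: "1 \<le> k" "k < n" and B: "B \<ge> 0"
  shows "(\<Sum>i<n. \<bar>x (knn n x i k) - x i\<bar>) \<le> real n * \<epsilon> + 2 * B * (real k * (2 * B / \<epsilon> + 1))"
proof -
  define bad where "bad = {i. i < n \<and> \<epsilon> < \<bar>x (knn n x i k) - x i\<bar>}"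
  have "(\<Sum>i<n. \<bar>x (knn n x i k) - x i\<bar>) \<le> (\<Sum>i<n. \<epsilon> + (if i \<in> bad then 2 * B else 0))"
  proof (rule sum_mono)
    fix i assume i: "i \<in> {..<n}"
    have "knn n x i k < n" using knn_facts(1)[where x=x and i=i and n=n and k=k] i k by auto
    then have "\<bar>x (knn n x i k) - x i\<bar> \<le> 2 * B" using bnd i
      by (smt (verit) lessThan_iff)
    then show "\<bar>x (knn n x i k) - x i\<bar> \<le> \<epsilon> + (if i \<in> bad then 2 * B else 0)"
      using e i unfolding bad_def by auto
  qed
  also have "\<dots> = real n * \<epsilon> + (\<Sum>i<n. if i \<in> bad then 2 * B else 0)"
    by (simp add: sum.distrib)
  also have "(\<Sum>i<n. if i \<in> bad then 2 * B else 0) = (\<Sum>i\<in>{..<n} \<inter> bad. 2 * B)"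
    by (rule sum.inter_restrict[symmetric]) simp
  also have "{..<n} \<inter> bad = bad" unfolding bad_def by auto
  also have "(\<Sum>i\<in>bad. 2 * B) = 2 * B * real (card bad)" by simp
  also have "\<dots> \<le> 2 * B * (real k * (2 * B / \<epsilon> + 1))"
    using bad_card[OF bnd e k B] B unfolding bad_def by (intro mult_left_mono) auto
  finally show ?thesis by simp
qed

lemma fub:
  assumes "prob_space M2" "f \<in> borel_measurable (M1 \<Otimes>\<^sub>M M2)"
  shows "integral\<^sup>N (M1 \<Otimes>\<^sub>M M2) f = (\<integral>\<^sup>+ x. \<integral>\<^sup>+ y. f (x, y) \<partial>M2 \<partial>M1)"
  using sigma_finite_measure.nn_integral_fst[OF prob_space_imp_sigma_finite[OF assms(1)] assms(2)] by simp

lemma int_bound: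
  fixes \<mu> :: "real measure"
  assumes P: "prob_space \<mu>" and sets: "sets \<mu> = sets borel" and AEB: "AE y in \<mu>. \<bar>y\<bar> \<le> B"
    and B: "B \<ge> 0" and K: "K \<ge> 1" "n > K" and e: "\<epsilon> > 0"
  shows "(\<integral>\<^sup>+\<omega>. ennreal \<bar>smote_Z n \<omega> - smote_X \<omega>\<bar> \<partial>smote_space \<mu> K n)
           \<le> ennreal (\<epsilon> + 2 * B * (real K * (2 * B / \<epsilon> + 1)) / real n)"
proof -
  define M1 where "M1 = PiM {..<n} (\<lambda>_. \<mu>)"
  define Pi where "Pi = measure_pmf (pmf_of_set {..<n})"
  define Pk where "Pk = measure_pmf (pmf_of_set {1..K})"
  define U where "U = uniform_measure lborel {0..1::real}"
  define F where "F = (\<lambda>\<omega>. ennreal \<bar>smote_Z n \<omega> - smote_X \<omega>\<bar>)"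
  define d where "d = (\<lambda>x i k. \<bar>x (knn n x i k) - x i\<bar>)"
  have S: "smote_space \<mu> K n = M1 \<Otimes>\<^sub>M (Pi \<Otimes>\<^sub>M (Pk \<Otimes>\<^sub>M U))"
    unfolding smote_space_def M1_def Pi_def Pk_def U_def ..
  have Fm: "F \<in> borel_measurable (M1 \<Otimes>\<^sub>M (Pi \<Otimes>\<^sub>M (Pk \<Otimes>\<^sub>M U)))"
    unfolding F_def S[symmetric] using diff_meas[OF sets, of n K] by measurable
  have PU: "prob_space U" unfolding U_def by (rule prob_space_uniform_measure) (auto simp: emeasure_lborel_Icc)
  have PPk: "prob_space Pk" unfolding Pk_def by (rule prob_space_measure_pmf)
  have PPi: "prob_space Pi" unfolding Pi_def by (rule prob_space_measure_pmf)
  have PM1: "prob_space M1" unfolding M1_def by (rule prob_space_PiM) (use P in auto)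
  have n0: "n > 0" using K by simp
  have inner: "(\<integral>\<^sup>+ y. F (x, y) \<partial>(Pi \<Otimes>\<^sub>M (Pk \<Otimes>\<^sub>M U)))
      \<le> ennreal ((\<Sum>i<n. (\<Sum>k\<in>{1..K}. d x i k) / real K) / real n)" if x: "x \<in> space M1" for x
  proof -
    have m1: "(\<lambda>y. F (x, y)) \<in> borel_measurable (Pi \<Otimes>\<^sub>M (Pk \<Otimes>\<^sub>M U))"
      by (rule measurable_Pair2[OF Fm x])
    have lvl3: "(\<integral>\<^sup>+ l. F (x, (i, (k, l))) \<partial>U) \<le> ennreal (d x i k)" for i k
    proof -
      have "AE l in U. l \<in> {0..1}" unfolding U_def by (rule AE_uniform_measureI) auto
      then have "AE l in U. F (x, (i, (k, l))) \<le> ennreal (d x i k)"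
      proof eventually_elim
        case (elim l)
        have "\<bar>l * (x (knn n x i k) - x i)\<bar> \<le> \<bar>x (knn n x i k) - x i\<bar>"
          using elim by (auto simp: abs_mult intro: mult_left_le_one_le)
        then show ?case unfolding F_def d_def smote_Z_def smote_X_def by (simp add: ennreal_leI)
      qed
      then have "(\<integral>\<^sup>+ l. F (x, (i, (k, l))) \<partial>U) \<le> (\<integral>\<^sup>+ l. ennreal (d x i k) \<partial>U)"
        by (rule nn_integral_mono_AE)
      also have "\<dots> = ennreal (d x i k)" using prob_space.emeasure_space_1[OF PU] by simp
      finally show ?thesis .
    qed
    have lvl2: "(\<integral>\<^sup>+ z. F (x, (i, z)) \<partial>(Pk \<Otimes>\<^sub>M U)) \<le> ennreal ((\<Sum>k\<in>{1..K}. d x i k) / real K)" for i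
    proof -
      have m2: "(\<lambda>z. F (x, (i, z))) \<in> borel_measurable (Pk \<Otimes>\<^sub>M U)"
        by (rule measurable_Pair2[OF m1]) (simp add: Pi_def)
      have "(\<integral>\<^sup>+ z. F (x, (i, z)) \<partial>(Pk \<Otimes>\<^sub>M U)) = (\<integral>\<^sup>+ k. \<integral>\<^sup>+ l. F (x, (i, (k, l))) \<partial>U \<partial>Pk)"
        using fub[OF PU m2] by simp
      also have "\<dots> = (\<Sum>k\<in>{1..K}. (\<integral>\<^sup>+ l. F (x, (i, (k, l))) \<partial>U) * ennreal (1 / real K))"
        unfolding Pk_def using K by (subst nn_integral_measure_pmf_finite) auto
      also have "\<dots> \<le> (\<Sum>k\<in>{1..K}. ennreal (d x i k) * ennreal (1 / real K))"
        by (intro sum_mono mult_right_mono lvl3) auto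
      also have "\<dots> = (\<Sum>k\<in>{1..K}. ennreal (d x i k * (1 / real K)))"
        by (intro sum.cong refl, subst ennreal_mult) (auto simp: d_def)
      also have "\<dots> = ennreal (\<Sum>k\<in>{1..K}. d x i k * (1 / real K))"
        by (rule sum_ennreal) (simp add: d_def)
      also have "\<dots> = ennreal ((\<Sum>k\<in>{1..K}. d x i k) / real K)"
        by (simp add: sum_divide_distrib)
      finally show ?thesis .
    qed
    have "(\<integral>\<^sup>+ y. F (x, y) \<partial>(Pi \<Otimes>\<^sub>M (Pk \<Otimes>\<^sub>M U))) = (\<integral>\<^sup>+ i. \<integral>\<^sup>+ z. F (x, (i, z)) \<partial>(Pk \<Otimes>\<^sub>M U) \<partial>Pi)"
      using fub[OF prob_space_pair[OF PPk PU] m1] by simp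
    also have "\<dots> = (\<Sum>i\<in>{..<n}. (\<integral>\<^sup>+ z. F (x, (i, z)) \<partial>(Pk \<Otimes>\<^sub>M U)) * ennreal (1 / real n))"
    proof -
      have ne: "{..<n} \<noteq> {}" using n0 by auto
      show ?thesis unfolding Pi_def using ne by (subst nn_integral_measure_pmf_finite) auto
    qed
    also have "\<dots> \<le> (\<Sum>i\<in>{..<n}. ennreal ((\<Sum>k\<in>{1..K}. d x i k) / real K) * ennreal (1 / real n))"
      by (intro sum_mono mult_right_mono lvl2) auto
    also have "\<dots> = (\<Sum>i\<in>{..<n}. ennreal ((\<Sum>k\<in>{1..K}. d x i k) / real K * (1 / real n)))"
      by (intro sum.cong refl, subst ennreal_mult) (auto simp: d_def sum_nonneg)
    also have "\<dots> = ennreal (\<Sum>i\<in>{..<n}. (\<Sum>k\<in>{1..K}. d x i k) / real K * (1 / real n))"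
      by (rule sum_ennreal) (simp add: d_def sum_nonneg)
    also have "\<dots> = ennreal ((\<Sum>i<n. (\<Sum>k\<in>{1..K}. d x i k) / real K) / real n)"
      by (simp add: sum_divide_distrib)
    finally show ?thesis .
  qed
  define c where "c = \<epsilon> + 2 * B * (real K * (2 * B / \<epsilon> + 1)) / real n"
  have AEx: "AE x in M1. \<forall>j\<in>{..<n}. \<bar>x j\<bar> \<le> B"
    unfolding M1_def by (intro eventually_ball_finite ballI AE_PiM_component[OF P]) (use AEB in auto)
  have Gb: "(\<Sum>i<n. (\<Sum>k\<in>{1..K}. d x i k) / real K) / real n \<le> c" if bx: "\<forall>j\<in>{..<n}. \<bar>x j\<bar> \<le> B" for x
  proof -
    have "(\<Sum>i<n. (\<Sum>k\<in>{1..K}. d x i k) / real K) = (\<Sum>k\<in>{1..K}. (\<Sum>i<n. d x i k)) / real K"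
      by (simp add: sum_divide_distrib[symmetric]) (rule disjI2, rule sum.swap)
    also have "\<dots> \<le> (\<Sum>k\<in>{1..K}. real n * \<epsilon> + 2 * B * (real K * (2 * B / \<epsilon> + 1))) / real K"
    proof (intro divide_right_mono sum_mono)
      fix k assume k: "k \<in> {1..K}"
      have "(\<Sum>i<n. d x i k) \<le> real n * \<epsilon> + 2 * B * (real k * (2 * B / \<epsilon> + 1))"
        unfolding d_def by (rule sum_bound) (use bx e k K B in auto)
      also have "\<dots> \<le> real n * \<epsilon> + 2 * B * (real K * (2 * B / \<epsilon> + 1))"
        using k B e by (intro add_left_mono mult_left_mono mult_right_mono) (auto intro!: add_nonneg_nonneg divide_nonneg_pos)
      finally show "(\<Sum>i<n. d x i k) \<le> real n * \<epsilon> + 2 * B * (real K * (2 * B / \<epsilon> + 1))" .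
    qed simp
    also have "\<dots> = real n * \<epsilon> + 2 * B * (real K * (2 * B / \<epsilon> + 1))" using K by simp
    finally have "(\<Sum>i<n. (\<Sum>k\<in>{1..K}. d x i k) / real K) / real n
       \<le> (real n * \<epsilon> + 2 * B * (real K * (2 * B / \<epsilon> + 1))) / real n"
      by (rule divide_right_mono) simp
    also have "\<dots> = c" unfolding c_def using n0 by (simp add: add_divide_distrib)
    finally show ?thesis .
  qed
  have "(\<integral>\<^sup>+\<omega>. ennreal \<bar>smote_Z n \<omega> - smote_X \<omega>\<bar> \<partial>smote_space \<mu> K n)
      = (\<integral>\<^sup>+ x. \<integral>\<^sup>+ y. F (x, y) \<partial>(Pi \<Otimes>\<^sub>M (Pk \<Otimes>\<^sub>M U)) \<partial>M1)"
    unfolding S F_def[symmetric]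
    by (rule fub[OF prob_space_pair[OF PPi prob_space_pair[OF PPk PU]] Fm])
  also have "\<dots> \<le> (\<integral>\<^sup>+ x. ennreal c \<partial>M1)"
  proof (rule nn_integral_mono_AE)
    show "AE x in M1. (\<integral>\<^sup>+ y. F (x, y) \<partial>(Pi \<Otimes>\<^sub>M (Pk \<Otimes>\<^sub>M U))) \<le> ennreal c"
      using AEx AE_space
    proof eventually_elim
      case (elim x)
      then show ?case using inner[of x] Gb[of x] by (meson ennreal_leI order_trans)
    qed
  qed
  also have "\<dots> = ennreal c" using prob_space.emeasure_space_1[OF PM1] by simp
  finally show ?thesis unfolding c_def .
qed


lemma u_lim:
  fixes b :: real and K :: nat
  shows "(\<lambda>n. 1 / sqrt (real n) + 2 * b * (real K * (2 * b / (1 / sqrt (real n)) + 1)) / real n) \<longlonglongrightarrow> 0"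
proof -
  have e: "(\<lambda>n. 1 / sqrt (real n) + 2 * b * (real K * (2 * b / (1 / sqrt (real n)) + 1)) / real n)
     = (\<lambda>n. 1 / sqrt (real n) + (4 * b * b * real K) * (sqrt (real n) / real n) + (2 * b * real K) * (1 / real n))"
    by (rule ext) (simp add: field_simps add_divide_distrib)
  have l1: "(\<lambda>n. 1 / sqrt (real n)) \<longlonglongrightarrow> 0" by real_asymp
  have l2: "(\<lambda>n. sqrt (real n) / real n) \<longlonglongrightarrow> 0" by real_asymp
  have l3: "(\<lambda>n. 1 / real n) \<longlonglongrightarrow> 0" by real_asymp
  show ?thesis unfolding e
    using tendsto_add[OF tendsto_add[OF l1 tendsto_mult_right_zero[OF l2]] tendsto_mult_right_zero[OF l3]] by simp
qed

theorem corollary3: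
  fixes \<mu> :: "real measure" and K :: nat
  assumes "prob_space \<mu>"
    and "sets \<mu> = sets borel"
    and "\<forall>x. measure \<mu> {x} = 0"
    and "\<exists>C. compact C \<and> emeasure \<mu> C = 1"
    and "K \<ge> 1"
  shows "(\<forall>n>K. (\<lambda>\<omega>. smote_Z n \<omega> - smote_X \<omega>) \<in> borel_measurable (smote_space \<mu> K n))
     \<and> (\<lambda>n. \<integral>\<^sup>+\<omega>. ennreal \<bar>smote_Z n \<omega> - smote_X \<omega>\<bar> \<partial>smote_space \<mu> K n) \<longlonglongrightarrow> 0"
proof
  show "\<forall>n>K. (\<lambda>\<omega>. smote_Z n \<omega> - smote_X \<omega>) \<in> borel_measurable (smote_space \<mu> K n)"
    using diff_meas[OF assms(2)] by blast
  obtain C where C: "compact C" "emeasure \<mu> C = 1" using assms(4) by blast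
  obtain b where b: "b > 0" "\<forall>y\<in>C. norm y \<le> b" using compact_imp_bounded[OF C(1)] bounded_pos by metis
  have Cs: "C \<in> sets \<mu>" using assms(2) compact_imp_closed[OF C(1)] by simp
  have "measure \<mu> C = 1" using C(2) by (simp add: measure_def)
  then have "AE y in \<mu>. y \<in> C" using prob_space.AE_in_set_eq_1[OF assms(1) Cs] by simp
  then have AEB: "AE y in \<mu>. \<bar>y\<bar> \<le> b" by eventually_elim (use b in auto)
  define u where "u = (\<lambda>n. 1 / sqrt (real n) + 2 * b * (real K * (2 * b / (1 / sqrt (real n)) + 1)) / real n)"
  have ul: "(\<lambda>n. ennreal (u n)) \<longlonglongrightarrow> ennreal 0"
    unfolding u_def by (rule tendsto_ennrealI[OF u_lim])
  have ev: "eventually (\<lambda>n. (\<integral>\<^sup>+\<omega>. ennreal \<bar>smote_Z n \<omega> - smote_X \<omega>\<bar> \<partial>smote_space \<mu> K n) \<le> ennreal (u n)) sequentially"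
  proof (rule eventually_sequentiallyI[of "Suc K"])
    fix n assume n: "Suc K \<le> n"
    show "(\<integral>\<^sup>+\<omega>. ennreal \<bar>smote_Z n \<omega> - smote_X \<omega>\<bar> \<partial>smote_space \<mu> K n) \<le> ennreal (u n)"
      unfolding u_def
      by (rule int_bound[OF assms(1,2) AEB]) (use b n assms(5) in auto)
  qed
  show "(\<lambda>n. \<integral>\<^sup>+\<omega>. ennreal \<bar>smote_Z n \<omega> - smote_X \<omega>\<bar> \<partial>smote_space \<mu> K n) \<longlonglongrightarrow> 0"
    by (rule tendsto_sandwich[OF _ ev tendsto_const]) (use ul in auto)
qed

end
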